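(* Algorithm $\mathsf{NG}$ (described in the context) does not satisfy the common core property. That is, it is not the case that for every finite set of processes $\mathcal{P}$, every asymmetric fail-prone system $\mathbb{F}$ on $\mathcal{P}$, every asymmetric Byzantine quorum system $\mathbb{Q}$ for $\mathbb{F}$, and every execution of $\mathsf{NG}$ with a guild, there exists a set $S^+$ consisting of the values ag-proposed by the members of some quorum $Q_i\in\mathcal{Q}_i$ of some process $p_i$ in the maximal guild, such that $S^+\subseteq U$ for every set $U$ ag-delivered by a process of the maximal guild.
   Context: System model: a finite set $\mathcal{P}=\{p_1,\dots,p_n\}$ of processes communicating asynchronously over authenticated point-to-point links; every message sent from a correct process to a correct process is eventually delivered. A process that follows its protocol is correct; others (faulty, Byzantine) may behave arbitrarily. $F\subseteq\mathcal{P}$ denotes the (unknown) set of faulty processes of an execution. For $\mathcal{A}\subseteq 2^{\mathcal{P}}$, write $\mathcal{A}^*=\{A' : A'\subseteq A,\ A\in\mathcal{A}\}$. An asymmetric fail-prone system is an array $\mathbb{F}=[\mathcal{F}_1,\dots,\mathcal{F}_n]$ with $\mathcal{F}_i\subseteq 2^{\mathcal{P}}$. An asymmetric Byzantine quorum system for $\mathbb{F}$ is an array $\mathbb{Q}=[\mathcal{Q}_1,\dots,\mathcal{Q}_n]$ with $\mathcal{Q}_i\subseteq 2^{\mathcal{P}}$ (elements of $\mathcal{Q}_i$ are called quorums for $p_i$) satisfying: (consistency) for all $i,j$, all $Q_i\in\mathcal{Q}_i$, $Q_j\in\mathcal{Q}_j$ and all $F_{ij}\in\mathcal{F}_i^*\cap\mathcal{F}_j^*$,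 $Q_i\cap Q_j\not\subseteq F_{ij}$; (availability) for all $i$ and all $F_i\in\mathcal{F}_i$ there is $Q_i\in\mathcal{Q}_i$ with $F_i\cap Q_i=\emptyset$. A correct process $p_i$ is wise if $F\in\mathcal{F}_i^*$ and naive otherwise. A guild is a set $\mathcal{G}$ of wise processes such that every $p_i\in\mathcal{G}$ has some $Q_i\in\mathcal{Q}_i$ with $Q_i\subseteq\mathcal{G}$. An execution with a guild is one in which a nonempty guild exists; the maximal guild is the union of all guilds. Asymmetric reliable broadcast (interface arb-broadcast / arb-deliver) is a primitive which, in every execution with a guild, guarantees: if a correct process arb-broadcasts $m$, every process of the maximal guild eventually arb-delivers $m$; for each sender, all processes of the maximal guild that arb-deliver a message from it arb-deliver the same message; if some process of the maximal guild arb-delivers a message from a sender, every process of the maximal guild eventually arb-delivers a message from that sender; a correct process arb-delivers at most one message per sender, and if the sender is correct, only a message it arb-broadcast. Algorithm $\mathsf{NG}$ (code of process $p_i$; each correct process invokes ag-propose$(x_i)$ exactly once; each guarded action "upon there being ..." is executed at most once). State: sets $S_i,T_i,U_i$, initially empty. (1) Upon ag-propose$(x_i)$: arb-broadcast $(p_i,x_i)$. (2) Upon arb-delivering $(p_j,x_j)$ from $p_j$: $S_i\gets S_i\cup\{(p_j,x_j)\}$. (3) Upon there being $Q\in\mathcal{Q}_i$ such that $p_i$ has arb-delivered from every member of $Q$: send $\langle\mathrm{DistributeS},p_i,S_i\rangle$ to all processes. (4) Upon receiving $\langle\mathrm{DistributeS},p_j,S_j\rangle$: $T_i\gets T_i\cup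 S_j$. (5) Upon there being $Q\in\mathcal{Q}_i$ such that a DistributeS message was received from every member of $Q$: send $\langle\mathrm{DistributeT},p_i,T_i\rangle$ to all processes. (6) Upon receiving $\langle\mathrm{DistributeT},p_j,T_j\rangle$ from $p_j$: $U_i\gets U_i\cup T_j$. (7) Upon there being $Q\in\mathcal{Q}_i$ such that a DistributeT message was received from every member of $Q$: ag-deliver$(U_i)$. Common core property (of a protocol with interface ag-propose/ag-deliver): in any execution with a guild, there exists a set $S^+$ composed of the values ag-proposed by the processes of some quorum $Q_i\in\mathcal{Q}_i$ of some process $p_i$ in the maximal guild, such that every process of the maximal guild that ag-delivers a set $U$ has $S^+\subseteq U$. *)

theory Defs
  imports Main
begin

definition downclose :: "'a set set \<Rightarrow> 'a set set" where
  "downclose A = {A'. \<exists>B\<in>A. A' \<subseteq> B}"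

definition fail_prone :: "nat set \<Rightarrow> (nat \<Rightarrow> nat set set) \<Rightarrow> bool" where
  "fail_prone P Fs \<longleftrightarrow> (\<forall>i\<in>P. \<forall>F\<in>Fs i. F \<subseteq> P)"

definition byz_quorum_system ::
  "nat set \<Rightarrow> (nat \<Rightarrow> nat set set) \<Rightarrow> (nat \<Rightarrow> nat set set) \<Rightarrow> bool" where
  "byz_quorum_system P Fs Qs \<longleftrightarrow>
     (\<forall>i\<in>P. \<forall>Q\<in>Qs i. Q \<subseteq> P) \<and>
     (\<forall>i\<in>P. \<forall>j\<in>P. \<forall>Qi\<in>Qs i. \<forall>Qj\<in>Qs j.
        \<forall>Fij\<in>downclose (Fs i) \<inter> downclose (Fs j). \<not> (Qi \<inter> Qj \<subseteq> Fij)) \<and>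
     (\<forall>i\<in>P. \<forall>Fi\<in>Fs i. \<exists>Qi\<in>Qs i. Fi \<inter> Qi = {})"

definition correct :: "nat set \<Rightarrow> nat set \<Rightarrow> nat set" where
  "correct P Fa = P - Fa"

definition wise :: "nat set \<Rightarrow> (nat \<Rightarrow> nat set set) \<Rightarrow> nat set \<Rightarrow> nat \<Rightarrow> bool" where
  "wise P Fs Fa i \<longleftrightarrow> i \<in> correct P Fa \<and> Fa \<in> downclose (Fs i)"

definition guild ::
  "nat set \<Rightarrow> (nat \<Rightarrow> nat set set) \<Rightarrow> (nat \<Rightarrow> nat set set) \<Rightarrow> nat set \<Rightarrow> nat set \<Rightarrow> bool" where
  "guild P Fs Qs Fa G \<longleftrightarrow> (\<forall>i\<in>G. wise P Fs Fa i \<and> (\<exists>Q\<in>Qs i. Q \<subseteq> G))"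

definition max_guild ::
  "nat set \<Rightarrow> (nat \<Rightarrow> nat set set) \<Rightarrow> (nat \<Rightarrow> nat set set) \<Rightarrow> nat set \<Rightarrow> nat set" where
  "max_guild P Fs Qs Fa = \<Union> {G. guild P Fs Qs Fa G}"

type_synonym pairs = "(nat \<times> nat) set"

datatype msg = DistributeS pairs | DistributeT pairs

(* Propose i x       : p_i invokes ag-propose(x) (and thereby arb-broadcasts (p_i,x));
   ArbDeliver i j x  : p_i arb-delivers (p_j,x) from p_j;
   Recv i j m        : p_i receives message m from p_j over the authenticated link;
   Idle              : no event at this time step. *)
datatype event = Propose nat nat | ArbDeliver nat nat nat | Recv nat nat msg | Idle

record lstate =
  Sset :: pairs
  Tset :: pairs
  Uset :: pairs
  arb_from :: "nat set"
  dS_from :: "nat set"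
  dT_from :: "nat set"
  sentS :: "pairs option"    (* Some S: DistributeS with content S has been sent to all *)
  sentT :: "pairs option"    (* Some T: DistributeT with content T has been sent to all *)
  agdel :: "pairs option"   (* Some U: ag-deliver(U) has happened *)

definition init_state :: lstate where
  "init_state = \<lparr>Sset = {}, Tset = {}, Uset = {}, arb_from = {}, dS_from = {}, dT_from = {},
                 sentS = None, sentT = None, agdel = None\<rparr>"

(* guarded actions (3), (5), (7), each executed at most once, as soon as enabled *)
definition fire :: "nat set set \<Rightarrow> lstate \<Rightarrow> lstate" where
  "fire Qi st =
     (let st1 = (if sentS st = None \<and> (\<exists>Q\<in>Qi. Q \<subseteq> arb_from st)
                 then st\<lparr>sentS := Some (Sset st)\<rparr> else st);
          st2 = (if sentT st1 = None \<and> (\<exists>Q\<in>Qi. Q \<subseteq> dS_from st1)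
                 then st1\<lparr>sentT := Some (Tset st1)\<rparr> else st1)
      in (if agdel st2 = None \<and> (\<exists>Q\<in>Qi. Q \<subseteq> dT_from st2)
          then st2\<lparr>agdel := Some (Uset st2)\<rparr> else st2))"

fun handle :: "nat \<Rightarrow> event \<Rightarrow> lstate \<Rightarrow> lstate" where
  "handle i (ArbDeliver i' j x) st =
     (if i' = i then st\<lparr>Sset := Sset st \<union> {(j, x)}, arb_from := arb_from st \<union> {j}\<rparr> else st)"
| "handle i (Recv i' j (DistributeS X)) st =
     (if i' = i then st\<lparr>Tset := Tset st \<union> X, dS_from := dS_from st \<union> {j}\<rparr> else st)"
| "handle i (Recv i' j (DistributeT X)) st =
     (if i' = i then st\<lparr>Uset := Uset st \<union> X, dT_from := dT_from st \<union> {j}\<rparr> else st)"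
| "handle i (Propose i' x) st = st"
| "handle i Idle st = st"

(* local state of (correct) process i before the event at time n of trace tr *)
primrec lst :: "(nat \<Rightarrow> nat set set) \<Rightarrow> (nat \<Rightarrow> event) \<Rightarrow> nat \<Rightarrow> nat \<Rightarrow> lstate" where
  "lst Qs tr i 0 = fire (Qs i) init_state"
| "lst Qs tr i (Suc n) = fire (Qs i) (handle i (tr n) (lst Qs tr i n))"

fun ev_procs :: "event \<Rightarrow> nat set" where
  "ev_procs (Propose i x) = {i}"
| "ev_procs (ArbDeliver i j x) = {i, j}"
| "ev_procs (Recv i j m) = {i, j}"
| "ev_procs Idle = {}"

(* An (infinite, fair) execution of NG with faulty set Fa, on top of an
   asymmetric reliable broadcast satisfying its specification. *)
definition ng_execution ::
  "nat set \<Rightarrow> (nat \<Rightarrow> nat set set) \<Rightarrow> (nat \<Rightarrow> nat set set) \<Rightarrow> nat set \<Rightarrow> (nat \<Rightarrow> event) \<Rightarrow> bool" where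
  "ng_execution P Fs Qs Fa tr \<longleftrightarrow>
     (let C = correct P Fa; G = max_guild P Fs Qs Fa in
     Fa \<subseteq> P \<and>
     (\<forall>n. ev_procs (tr n) \<subseteq> P) \<and>
     \<comment> \<open>each correct process invokes ag-propose exactly once\<close>
     (\<forall>i\<in>C. \<exists>!n. \<exists>x. tr n = Propose i x) \<and>
     \<comment> \<open>authenticated links: a message from a correct sender was sent by it\<close>
     (\<forall>n i j X. j \<in> C \<longrightarrow> tr n = Recv i j (DistributeS X) \<longrightarrow> sentS (lst Qs tr j n) = Some X) \<and>
     (\<forall>n i j X. j \<in> C \<longrightarrow> tr n = Recv i j (DistributeT X) \<longrightarrow> sentT (lst Qs tr j n) = Some X) \<and>
     \<comment> \<open>reliable links between correct processes\<close>
     (\<forall>n i j X. i \<in> C \<longrightarrow> j \<in> C \<longrightarrow> sentS (lst Qs tr j n) = Some X \<longrightarrow>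
        (\<exists>m. tr m = Recv i j (DistributeS X))) \<and>
     (\<forall>n i j X. i \<in> C \<longrightarrow> j \<in> C \<longrightarrow> sentT (lst Qs tr j n) = Some X \<longrightarrow>
        (\<exists>m. tr m = Recv i j (DistributeT X))) \<and>
     \<comment> \<open>arb: integrity\<close>
     (\<forall>i\<in>C. \<forall>j n m x y. tr n = ArbDeliver i j x \<longrightarrow> tr m = ArbDeliver i j y \<longrightarrow> n = m) \<and>
     (\<forall>i\<in>C. \<forall>j\<in>C. \<forall>n x. tr n = ArbDeliver i j x \<longrightarrow> (\<exists>m<n. tr m = Propose j x)) \<and>
     \<comment> \<open>arb: validity\<close>
     (\<forall>j\<in>C. \<forall>i\<in>G. \<forall>m x. tr m = Propose j x \<longrightarrow> (\<exists>n. tr n = ArbDeliver i j x)) \<and>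
     \<comment> \<open>arb: consistency\<close>
     (\<forall>i\<in>G. \<forall>k\<in>G. \<forall>j n n' x y. tr n = ArbDeliver i j x \<longrightarrow> tr n' = ArbDeliver k j y \<longrightarrow> x = y) \<and>
     \<comment> \<open>arb: totality\<close>
     (\<forall>i\<in>G. \<forall>k\<in>G. \<forall>j n x. tr n = ArbDeliver i j x \<longrightarrow> (\<exists>n' y. tr n' = ArbDeliver k j y)))"

definition common_core ::
  "nat set \<Rightarrow> (nat \<Rightarrow> nat set set) \<Rightarrow> (nat \<Rightarrow> nat set set) \<Rightarrow> nat set \<Rightarrow> (nat \<Rightarrow> event) \<Rightarrow> bool" where
  "common_core P Fs Qs Fa tr \<longleftrightarrow>
     (\<exists>i\<in>max_guild P Fs Qs Fa. \<exists>Q\<in>Qs i. \<exists>val :: nat \<Rightarrow> nat.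
        (\<forall>j\<in>Q. j \<in> correct P Fa \<longrightarrow> (\<exists>n. tr n = Propose j (val j))) \<and>
        (\<forall>k\<in>max_guild P Fs Qs Fa. \<forall>n U. agdel (lst Qs tr k n) = Some U \<longrightarrow>
            {(j, val j) | j. j \<in> Q} \<subseteq> U))"

end

theory Submission imports Defs begin

lemma handle_sent[simp]:
  "sentS (handle i e st) = sentS st" "sentT (handle i e st) = sentT st" "agdel (handle i e st) = agdel st"
  by (induction i e st rule: handle.induct; simp)+

lemma fire_fields[simp]:
  "Sset (fire Q st) = Sset st" "Tset (fire Q st) = Tset st" "Uset (fire Q st) = Uset st"
  "arb_from (fire Q st) = arb_from st" "dS_from (fire Q st) = dS_from st" "dT_from (fire Q st) = dT_from st"
  by (simp_all add: fire_def Let_def)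

lemma fire_sent[simp]:
  "sentS (fire Q st) = (if sentS st = None \<and> (\<exists>q\<in>Q. q \<subseteq> arb_from st) then Some (Sset st) else sentS st)"
  "sentT (fire Q st) = (if sentT st = None \<and> (\<exists>q\<in>Q. q \<subseteq> dS_from st) then Some (Tset st) else sentT st)"
  "agdel (fire Q st) = (if agdel st = None \<and> (\<exists>q\<in>Q. q \<subseteq> dT_from st) then Some (Uset st) else agdel st)"
  by (simp_all add: fire_def Let_def)

lemma fire_sentS: "sentS st \<noteq> None \<Longrightarrow> sentS (fire Q st) = sentS st"
  by simp
lemma fire_sentT: "sentT st \<noteq> None \<Longrightarrow> sentT (fire Q st) = sentT st"
  by simp
lemma fire_agdel: "agdel st \<noteq> None \<Longrightarrow> agdel (fire Q st) = agdel st"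
  by simp

lemma stabS: "sentS (lst Qs tr i n) = Some Y \<Longrightarrow> sentS (lst Qs tr i (n + k)) = Some Y"
  by (induction k) (auto simp: fire_sentS)
lemma stabT: "sentT (lst Qs tr i n) = Some Y \<Longrightarrow> sentT (lst Qs tr i (n + k)) = Some Y"
  by (induction k) (auto simp: fire_sentT)
lemma stabA: "agdel (lst Qs tr i n) = Some Y \<Longrightarrow> agdel (lst Qs tr i (n + k)) = Some Y"
  by (induction k) (auto simp: fire_agdel)

lemma stabS': "sentS (lst Qs tr i n0) = Some Y \<Longrightarrow> n0 \<le> n \<Longrightarrow> sentS (lst Qs tr i n) = Some Y"
  using stabS[of Qs tr i n0 Y "n - n0"] by simp
lemma stabT': "sentT (lst Qs tr i n0) = Some Y \<Longrightarrow> n0 \<le> n \<Longrightarrow> sentT (lst Qs tr i n) = Some Y"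
  using stabT[of Qs tr i n0 Y "n - n0"] by simp
lemma stabA': "agdel (lst Qs tr i n0) = Some Y \<Longrightarrow> n0 \<le> n \<Longrightarrow> agdel (lst Qs tr i n) = Some Y"
  using stabA[of Qs tr i n0 Y "n - n0"] by simp

lemma uniqS: "sentS (lst Qs tr i n0) = Some Y \<Longrightarrow> sentS (lst Qs tr i n) = Some X \<Longrightarrow> X = Y"
  by (cases "n0 \<le> n") (auto dest: stabS'[of _ _ _ n0 _ n] stabS'[of _ _ _ n _ n0])
lemma uniqT: "sentT (lst Qs tr i n0) = Some Y \<Longrightarrow> sentT (lst Qs tr i n) = Some X \<Longrightarrow> X = Y"
  by (cases "n0 \<le> n") (auto dest: stabT'[of _ _ _ n0 _ n] stabT'[of _ _ _ n _ n0])

definition S0 :: pairs where "S0 = {(0,0),(2,0)}"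
definition S1 :: pairs where "S1 = {(1,0),(2,0)}"

definition evs :: "event list" where
 "evs = [Propose 0 0, Propose 1 0, Propose 2 0,
  ArbDeliver 0 0 0, ArbDeliver 0 2 0, ArbDeliver 1 1 0, ArbDeliver 1 2 0,
  Recv 0 0 (DistributeS S0), Recv 0 2 (DistributeS {}), Recv 1 1 (DistributeS S1), Recv 1 2 (DistributeS {}),
  Recv 0 0 (DistributeT S0), Recv 0 2 (DistributeT {}), Recv 1 1 (DistributeT S1), Recv 1 2 (DistributeT {}),
  ArbDeliver 0 1 0, ArbDeliver 1 0 0,
  Recv 0 1 (DistributeS S1), Recv 1 0 (DistributeS S0), Recv 2 0 (DistributeS S0), Recv 2 1 (DistributeS S1), Recv 2 2 (DistributeS {}),
  Recv 0 1 (DistributeT S1), Recv 1 0 (DistributeT S0), Recv 2 0 (DistributeT S0), Recv 2 1 (DistributeT S1), Recv 2 2 (DistributeT {})]"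

definition trc :: "nat \<Rightarrow> event" where
  "trc n = (if n < 27 then evs ! n else Idle)"

definition Pc :: "nat set" where "Pc = {0,1,2}"
definition Fsc :: "nat \<Rightarrow> nat set set" where "Fsc i = (if i \<in> {0,1} then {{}} else {})"
definition Qsc :: "nat \<Rightarrow> nat set set" where
  "Qsc i = (if i = 0 then {{0,2},{0,1}} else if i = 1 then {{1,2},{0,1}} else {{}})"

lemma trc_lt: "trc n \<noteq> Idle \<Longrightarrow> n < 27"
  unfolding trc_def by (cases "n < 27") auto

lemma lt27: "(n::nat) < 27 \<Longrightarrow>
  (n = 0 \<or> n = 1 \<or> n = 2 \<or> n = 3 \<or> n = 4 \<or> n = 5 \<or> n = 6 \<or> n = 7 \<or> n = 8 \<or> n = 9 \<or>
   n = 10 \<or> n = 11 \<or> n = 12 \<or> n = 13 \<or> n = 14 \<or> n = 15 \<or> n = 16 \<or> n = 17 \<or> n = 18 \<or> n = 19 \<or>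
   n = 20 \<or> n = 21 \<or> n = 22 \<or> n = 23 \<or> n = 24 \<or> n = 25 \<or> n = 26)"
  by (simp add: less_Suc_eq numeral_eq_Suc)

lemma trc_vals:
  "trc 0 = Propose 0 0" "trc 1 = Propose 1 0" "trc 2 = Propose 2 0"
  "trc 3 = ArbDeliver 0 0 0" "trc 4 = ArbDeliver 0 2 0" "trc 5 = ArbDeliver 1 1 0" "trc 6 = ArbDeliver 1 2 0"
  "trc 7 = Recv 0 0 (DistributeS S0)" "trc 8 = Recv 0 2 (DistributeS {})" "trc 9 = Recv 1 1 (DistributeS S1)" "trc 10 = Recv 1 2 (DistributeS {})"
  "trc 11 = Recv 0 0 (DistributeT S0)" "trc 12 = Recv 0 2 (DistributeT {})" "trc 13 = Recv 1 1 (DistributeT S1)" "trc 14 = Recv 1 2 (DistributeT {})"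
  "trc 15 = ArbDeliver 0 1 0" "trc 16 = ArbDeliver 1 0 0"
  "trc 17 = Recv 0 1 (DistributeS S1)" "trc 18 = Recv 1 0 (DistributeS S0)" "trc 19 = Recv 2 0 (DistributeS S0)" "trc 20 = Recv 2 1 (DistributeS S1)" "trc 21 = Recv 2 2 (DistributeS {})"
  "trc 22 = Recv 0 1 (DistributeT S1)" "trc 23 = Recv 1 0 (DistributeT S0)" "trc 24 = Recv 2 0 (DistributeT S0)" "trc 25 = Recv 2 1 (DistributeT S1)" "trc 26 = Recv 2 2 (DistributeT {})"
  by (simp_all add: trc_def evs_def)

lemma init_simps[simp]: "Sset init_state = {}" "Tset init_state = {}" "Uset init_state = {}"
  "arb_from init_state = {}" "dS_from init_state = {}" "dT_from init_state = {}"
  "sentS init_state = None" "sentT init_state = None" "agdel init_state = None"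
  by (simp_all add: init_state_def)

lemma lst_Suc: "lst Qs tr i (Suc n) = fire (Qs i) (handle i (tr n) (lst Qs tr i n))" by simp

lemma c2: "sentS (lst Qsc trc 2 0) = Some {}" "sentT (lst Qsc trc 2 0) = Some {}"
  by (simp_all add: Qsc_def)

lemma lst_step: "lst Qs tr i n = R \<Longrightarrow> tr n = e \<Longrightarrow> m = Suc n \<Longrightarrow> lst Qs tr i m = fire (Qs i) (handle i e R)"
  by simp

lemma st0_0: "lst Qsc trc 0 0 = \<lparr>Sset = {}, Tset = {}, Uset = {}, arb_from = {}, dS_from = {}, dT_from = {}, sentS = None, sentT = None, agdel = None\<rparr>"
  by (simp add: fire_def Let_def Qsc_def init_state_def)

lemma st0_1: "lst Qsc trc 0 1 = \<lparr>Sset = {}, Tset = {}, Uset = {}, arb_from = {}, dS_from = {}, dT_from = {}, sentS = None, sentT = None, agdel = None\<rparr>"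
  by (rule trans[OF lst_step[OF st0_0 trc_vals(1)]]) (simp_all add: fire_def Let_def Qsc_def S0_def S1_def insert_commute)

lemma st0_2: "lst Qsc trc 0 2 = \<lparr>Sset = {}, Tset = {}, Uset = {}, arb_from = {}, dS_from = {}, dT_from = {}, sentS = None, sentT = None, agdel = None\<rparr>"
  by (rule trans[OF lst_step[OF st0_1 trc_vals(2)]]) (simp_all add: fire_def Let_def Qsc_def S0_def S1_def insert_commute)

lemma st0_3: "lst Qsc trc 0 3 = \<lparr>Sset = {}, Tset = {}, Uset = {}, arb_from = {}, dS_from = {}, dT_from = {}, sentS = None, sentT = None, agdel = None\<rparr>"
  by (rule trans[OF lst_step[OF st0_2 trc_vals(3)]]) (simp_all add: fire_def Let_def Qsc_def S0_def S1_def insert_commute)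

lemma st0_4: "lst Qsc trc 0 4 = \<lparr>Sset = {(0,0)}, Tset = {}, Uset = {}, arb_from = {0}, dS_from = {}, dT_from = {}, sentS = None, sentT = None, agdel = None\<rparr>"
  by (rule trans[OF lst_step[OF st0_3 trc_vals(4)]]) (simp_all add: fire_def Let_def Qsc_def S0_def S1_def insert_commute)

lemma st0_5: "lst Qsc trc 0 5 = \<lparr>Sset = {(0,0),(2,0)}, Tset = {}, Uset = {}, arb_from = {0,2}, dS_from = {}, dT_from = {}, sentS = Some {(0,0),(2,0)}, sentT = None, agdel = None\<rparr>"
  by (rule trans[OF lst_step[OF st0_4 trc_vals(5)]]) (simp_all add: fire_def Let_def Qsc_def S0_def S1_def insert_commute)

lemma st0_6: "lst Qsc trc 0 6 = \<lparr>Sset = {(0,0),(2,0)}, Tset = {}, Uset = {}, arb_from = {0,2}, dS_from = {}, dT_from = {}, sentS = Some {(0,0),(2,0)}, sentT = None, agdel = None\<rparr>"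
  by (rule trans[OF lst_step[OF st0_5 trc_vals(6)]]) (simp_all add: fire_def Let_def Qsc_def S0_def S1_def insert_commute)

lemma st0_7: "lst Qsc trc 0 7 = \<lparr>Sset = {(0,0),(2,0)}, Tset = {}, Uset = {}, arb_from = {0,2}, dS_from = {}, dT_from = {}, sentS = Some {(0,0),(2,0)}, sentT = None, agdel = None\<rparr>"
  by (rule trans[OF lst_step[OF st0_6 trc_vals(7)]]) (simp_all add: fire_def Let_def Qsc_def S0_def S1_def insert_commute)

lemma st0_8: "lst Qsc trc 0 8 = \<lparr>Sset = {(0,0),(2,0)}, Tset = {(0,0),(2,0)}, Uset = {}, arb_from = {0,2}, dS_from = {0}, dT_from = {}, sentS = Some {(0,0),(2,0)}, sentT = None, agdel = None\<rparr>"
  by (rule trans[OF lst_step[OF st0_7 trc_vals(8)]]) (simp_all add: fire_def Let_def Qsc_def S0_def S1_def insert_commute)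

lemma st0_9: "lst Qsc trc 0 9 = \<lparr>Sset = {(0,0),(2,0)}, Tset = {(0,0),(2,0)}, Uset = {}, arb_from = {0,2}, dS_from = {0,2}, dT_from = {}, sentS = Some {(0,0),(2,0)}, sentT = Some {(0,0),(2,0)}, agdel = None\<rparr>"
  by (rule trans[OF lst_step[OF st0_8 trc_vals(9)]]) (simp_all add: fire_def Let_def Qsc_def S0_def S1_def insert_commute)

lemma st0_10: "lst Qsc trc 0 10 = \<lparr>Sset = {(0,0),(2,0)}, Tset = {(0,0),(2,0)}, Uset = {}, arb_from = {0,2}, dS_from = {0,2}, dT_from = {}, sentS = Some {(0,0),(2,0)}, sentT = Some {(0,0),(2,0)}, agdel = None\<rparr>"
  by (rule trans[OF lst_step[OF st0_9 trc_vals(10)]]) (simp_all add: fire_def Let_def Qsc_def S0_def S1_def insert_commute)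

lemma st0_11: "lst Qsc trc 0 11 = \<lparr>Sset = {(0,0),(2,0)}, Tset = {(0,0),(2,0)}, Uset = {}, arb_from = {0,2}, dS_from = {0,2}, dT_from = {}, sentS = Some {(0,0),(2,0)}, sentT = Some {(0,0),(2,0)}, agdel = None\<rparr>"
  by (rule trans[OF lst_step[OF st0_10 trc_vals(11)]]) (simp_all add: fire_def Let_def Qsc_def S0_def S1_def insert_commute)

lemma st0_12: "lst Qsc trc 0 12 = \<lparr>Sset = {(0,0),(2,0)}, Tset = {(0,0),(2,0)}, Uset = {(0,0),(2,0)}, arb_from = {0,2}, dS_from = {0,2}, dT_from = {0}, sentS = Some {(0,0),(2,0)}, sentT = Some {(0,0),(2,0)}, agdel = None\<rparr>"
  by (rule trans[OF lst_step[OF st0_11 trc_vals(12)]]) (simp_all add: fire_def Let_def Qsc_def S0_def S1_def insert_commute)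

lemma st0_13: "lst Qsc trc 0 13 = \<lparr>Sset = {(0,0),(2,0)}, Tset = {(0,0),(2,0)}, Uset = {(0,0),(2,0)}, arb_from = {0,2}, dS_from = {0,2}, dT_from = {0,2}, sentS = Some {(0,0),(2,0)}, sentT = Some {(0,0),(2,0)}, agdel = Some {(0,0),(2,0)}\<rparr>"
  by (rule trans[OF lst_step[OF st0_12 trc_vals(13)]]) (simp_all add: fire_def Let_def Qsc_def S0_def S1_def insert_commute)

lemma st0_14: "lst Qsc trc 0 14 = \<lparr>Sset = {(0,0),(2,0)}, Tset = {(0,0),(2,0)}, Uset = {(0,0),(2,0)}, arb_from = {0,2}, dS_from = {0,2}, dT_from = {0,2}, sentS = Some {(0,0),(2,0)}, sentT = Some {(0,0),(2,0)}, agdel = Some {(0,0),(2,0)}\<rparr>"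
  by (rule trans[OF lst_step[OF st0_13 trc_vals(14)]]) (simp_all add: fire_def Let_def Qsc_def S0_def S1_def insert_commute)

lemma st0_15: "lst Qsc trc 0 15 = \<lparr>Sset = {(0,0),(2,0)}, Tset = {(0,0),(2,0)}, Uset = {(0,0),(2,0)}, arb_from = {0,2}, dS_from = {0,2}, dT_from = {0,2}, sentS = Some {(0,0),(2,0)}, sentT = Some {(0,0),(2,0)}, agdel = Some {(0,0),(2,0)}\<rparr>"
  by (rule trans[OF lst_step[OF st0_14 trc_vals(15)]]) (simp_all add: fire_def Let_def Qsc_def S0_def S1_def insert_commute)

lemma st0_16: "lst Qsc trc 0 16 = \<lparr>Sset = {(0,0),(1,0),(2,0)}, Tset = {(0,0),(2,0)}, Uset = {(0,0),(2,0)}, arb_from = {0,1,2}, dS_from = {0,2}, dT_from = {0,2}, sentS = Some {(0,0),(2,0)}, sentT = Some {(0,0),(2,0)}, agdel = Some {(0,0),(2,0)}\<rparr>"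
  by (rule trans[OF lst_step[OF st0_15 trc_vals(16)]]) (simp_all add: fire_def Let_def Qsc_def S0_def S1_def insert_commute)

lemma st1_0: "lst Qsc trc 1 0 = \<lparr>Sset = {}, Tset = {}, Uset = {}, arb_from = {}, dS_from = {}, dT_from = {}, sentS = None, sentT = None, agdel = None\<rparr>"
  by (simp add: fire_def Let_def Qsc_def init_state_def)

lemma st1_1: "lst Qsc trc 1 1 = \<lparr>Sset = {}, Tset = {}, Uset = {}, arb_from = {}, dS_from = {}, dT_from = {}, sentS = None, sentT = None, agdel = None\<rparr>"
  by (rule trans[OF lst_step[OF st1_0 trc_vals(1)]]) (simp_all add: fire_def Let_def Qsc_def S0_def S1_def insert_commute)

lemma st1_2: "lst Qsc trc 1 2 = \<lparr>Sset = {}, Tset = {}, Uset = {}, arb_from = {}, dS_from = {}, dT_from = {}, sentS = None, sentT = None, agdel = None\<rparr>"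
  by (rule trans[OF lst_step[OF st1_1 trc_vals(2)]]) (simp_all add: fire_def Let_def Qsc_def S0_def S1_def insert_commute)

lemma st1_3: "lst Qsc trc 1 3 = \<lparr>Sset = {}, Tset = {}, Uset = {}, arb_from = {}, dS_from = {}, dT_from = {}, sentS = None, sentT = None, agdel = None\<rparr>"
  by (rule trans[OF lst_step[OF st1_2 trc_vals(3)]]) (simp_all add: fire_def Let_def Qsc_def S0_def S1_def insert_commute)

lemma st1_4: "lst Qsc trc 1 4 = \<lparr>Sset = {}, Tset = {}, Uset = {}, arb_from = {}, dS_from = {}, dT_from = {}, sentS = None, sentT = None, agdel = None\<rparr>"
  by (rule trans[OF lst_step[OF st1_3 trc_vals(4)]]) (simp_all add: fire_def Let_def Qsc_def S0_def S1_def insert_commute)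

lemma st1_5: "lst Qsc trc 1 5 = \<lparr>Sset = {}, Tset = {}, Uset = {}, arb_from = {}, dS_from = {}, dT_from = {}, sentS = None, sentT = None, agdel = None\<rparr>"
  by (rule trans[OF lst_step[OF st1_4 trc_vals(5)]]) (simp_all add: fire_def Let_def Qsc_def S0_def S1_def insert_commute)

lemma st1_6: "lst Qsc trc 1 6 = \<lparr>Sset = {(1,0)}, Tset = {}, Uset = {}, arb_from = {1}, dS_from = {}, dT_from = {}, sentS = None, sentT = None, agdel = None\<rparr>"
  by (rule trans[OF lst_step[OF st1_5 trc_vals(6)]]) (simp_all add: fire_def Let_def Qsc_def S0_def S1_def insert_commute)

lemma st1_7: "lst Qsc trc 1 7 = \<lparr>Sset = {(1,0),(2,0)}, Tset = {}, Uset = {}, arb_from = {1,2}, dS_from = {}, dT_from = {}, sentS = Some {(1,0),(2,0)}, sentT = None, agdel = None\<rparr>"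
  by (rule trans[OF lst_step[OF st1_6 trc_vals(7)]]) (simp_all add: fire_def Let_def Qsc_def S0_def S1_def insert_commute)

lemma st1_8: "lst Qsc trc 1 8 = \<lparr>Sset = {(1,0),(2,0)}, Tset = {}, Uset = {}, arb_from = {1,2}, dS_from = {}, dT_from = {}, sentS = Some {(1,0),(2,0)}, sentT = None, agdel = None\<rparr>"
  by (rule trans[OF lst_step[OF st1_7 trc_vals(8)]]) (simp_all add: fire_def Let_def Qsc_def S0_def S1_def insert_commute)

lemma st1_9: "lst Qsc trc 1 9 = \<lparr>Sset = {(1,0),(2,0)}, Tset = {}, Uset = {}, arb_from = {1,2}, dS_from = {}, dT_from = {}, sentS = Some {(1,0),(2,0)}, sentT = None, agdel = None\<rparr>"
  by (rule trans[OF lst_step[OF st1_8 trc_vals(9)]]) (simp_all add: fire_def Let_def Qsc_def S0_def S1_def insert_commute)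

lemma st1_10: "lst Qsc trc 1 10 = \<lparr>Sset = {(1,0),(2,0)}, Tset = {(1,0),(2,0)}, Uset = {}, arb_from = {1,2}, dS_from = {1}, dT_from = {}, sentS = Some {(1,0),(2,0)}, sentT = None, agdel = None\<rparr>"
  by (rule trans[OF lst_step[OF st1_9 trc_vals(10)]]) (simp_all add: fire_def Let_def Qsc_def S0_def S1_def insert_commute)

lemma st1_11: "lst Qsc trc 1 11 = \<lparr>Sset = {(1,0),(2,0)}, Tset = {(1,0),(2,0)}, Uset = {}, arb_from = {1,2}, dS_from = {1,2}, dT_from = {}, sentS = Some {(1,0),(2,0)}, sentT = Some {(1,0),(2,0)}, agdel = None\<rparr>"
  by (rule trans[OF lst_step[OF st1_10 trc_vals(11)]]) (simp_all add: fire_def Let_def Qsc_def S0_def S1_def insert_commute)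

lemma st1_12: "lst Qsc trc 1 12 = \<lparr>Sset = {(1,0),(2,0)}, Tset = {(1,0),(2,0)}, Uset = {}, arb_from = {1,2}, dS_from = {1,2}, dT_from = {}, sentS = Some {(1,0),(2,0)}, sentT = Some {(1,0),(2,0)}, agdel = None\<rparr>"
  by (rule trans[OF lst_step[OF st1_11 trc_vals(12)]]) (simp_all add: fire_def Let_def Qsc_def S0_def S1_def insert_commute)

lemma st1_13: "lst Qsc trc 1 13 = \<lparr>Sset = {(1,0),(2,0)}, Tset = {(1,0),(2,0)}, Uset = {}, arb_from = {1,2}, dS_from = {1,2}, dT_from = {}, sentS = Some {(1,0),(2,0)}, sentT = Some {(1,0),(2,0)}, agdel = None\<rparr>"
  by (rule trans[OF lst_step[OF st1_12 trc_vals(13)]]) (simp_all add: fire_def Let_def Qsc_def S0_def S1_def insert_commute)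

lemma st1_14: "lst Qsc trc 1 14 = \<lparr>Sset = {(1,0),(2,0)}, Tset = {(1,0),(2,0)}, Uset = {(1,0),(2,0)}, arb_from = {1,2}, dS_from = {1,2}, dT_from = {1}, sentS = Some {(1,0),(2,0)}, sentT = Some {(1,0),(2,0)}, agdel = None\<rparr>"
  by (rule trans[OF lst_step[OF st1_13 trc_vals(14)]]) (simp_all add: fire_def Let_def Qsc_def S0_def S1_def insert_commute)

lemma st1_15: "lst Qsc trc 1 15 = \<lparr>Sset = {(1,0),(2,0)}, Tset = {(1,0),(2,0)}, Uset = {(1,0),(2,0)}, arb_from = {1,2}, dS_from = {1,2}, dT_from = {1,2}, sentS = Some {(1,0),(2,0)}, sentT = Some {(1,0),(2,0)}, agdel = Some {(1,0),(2,0)}\<rparr>"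
  by (rule trans[OF lst_step[OF st1_14 trc_vals(15)]]) (simp_all add: fire_def Let_def Qsc_def S0_def S1_def insert_commute)

lemma st1_16: "lst Qsc trc 1 16 = \<lparr>Sset = {(1,0),(2,0)}, Tset = {(1,0),(2,0)}, Uset = {(1,0),(2,0)}, arb_from = {1,2}, dS_from = {1,2}, dT_from = {1,2}, sentS = Some {(1,0),(2,0)}, sentT = Some {(1,0),(2,0)}, agdel = Some {(1,0),(2,0)}\<rparr>"
  by (rule trans[OF lst_step[OF st1_15 trc_vals(16)]]) (simp_all add: fire_def Let_def Qsc_def S0_def S1_def insert_commute)

lemma a0: "sentS (lst Qsc trc 0 5) = Some S0" using st0_5 by (simp add: S0_def)
lemma a1: "sentT (lst Qsc trc 0 9) = Some S0" using st0_9 by (simp add: S0_def)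
lemma a2: "agdel (lst Qsc trc 0 13) = Some S0" using st0_13 by (simp add: S0_def)
lemma b0: "sentS (lst Qsc trc 1 7) = Some S1" using st1_7 by (simp add: S1_def)
lemma b1: "sentT (lst Qsc trc 1 11) = Some S1" using st1_11 by (simp add: S1_def)
lemma b2: "agdel (lst Qsc trc 1 15) = Some S1" using st1_15 by (simp add: S1_def)

definition SS :: "nat \<Rightarrow> pairs" where "SS j = (if j = 0 then S0 else if j = 1 then S1 else {})"

lemma sentS_all: "j \<in> Pc \<Longrightarrow> sentS (lst Qsc trc j n) = Some X \<Longrightarrow> X = SS j"
proof -
  assume h: "j \<in> Pc" "sentS (lst Qsc trc j n) = Some X"
  have "j = 0 \<or> j = 1 \<or> j = 2" using h(1) by (simp add: Pc_def)
  then show ?thesis using h(2) uniqS[OF a0, of n X] uniqS[OF b0, of n X] uniqS[OF c2(1), of n X]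
    by (auto simp: SS_def)
qed
lemma sentT_all: "j \<in> Pc \<Longrightarrow> sentT (lst Qsc trc j n) = Some X \<Longrightarrow> X = SS j"
proof -
  assume h: "j \<in> Pc" "sentT (lst Qsc trc j n) = Some X"
  have "j = 0 \<or> j = 1 \<or> j = 2" using h(1) by (simp add: Pc_def)
  then show ?thesis using h(2) uniqT[OF a1, of n X] uniqT[OF b1, of n X] uniqT[OF c2(2), of n X]
    by (auto simp: SS_def)
qed

lemma sS0: "5 \<le> n \<Longrightarrow> sentS (lst Qsc trc 0 n) = Some S0" by (rule stabS'[OF a0])
lemma sS1: "7 \<le> n \<Longrightarrow> sentS (lst Qsc trc 1 n) = Some S1" by (rule stabS'[OF b0])
lemma sS2: "sentS (lst Qsc trc 2 n) = Some {}" by (rule stabS'[OF c2(1)]) simp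
lemma sT0: "9 \<le> n \<Longrightarrow> sentT (lst Qsc trc 0 n) = Some S0" by (rule stabT'[OF a1])
lemma sT1: "11 \<le> n \<Longrightarrow> sentT (lst Qsc trc 1 n) = Some S1" by (rule stabT'[OF b1])
lemma sT2: "sentT (lst Qsc trc 2 n) = Some {}" by (rule stabT'[OF c2(2)]) simp

lemma trc_Suc0: "trc (Suc 0) = Propose 1 0" by (simp add: trc_def evs_def)
lemmas sS1' = sS1[unfolded One_nat_def]
lemmas sT1' = sT1[unfolded One_nat_def]

lemma trc_any: "trc n \<noteq> Idle \<Longrightarrow> P (trc n) n \<Longrightarrow>
  (\<And>n. n < 27 \<Longrightarrow> P (trc n) n \<Longrightarrow> Q n) \<Longrightarrow> Q n"
  using trc_lt by blast

lemma arb_set: "trc n = ArbDeliver i j x \<Longrightarrow>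
  (i,j,x,n) \<in> {(0,0,0,3),(0,2,0,4),(1,1,0,5),(1,2,0,6),(0,1,0,15),(1,0,0,16)}"
proof -
  assume h: "trc n = ArbDeliver i j x"
  have lt: "n < 27" using h trc_lt by force
  show ?thesis using lt27[OF lt] h(1) by (elim disjE; simp add: trc_vals trc_Suc0)
qed

lemma prop_set: "trc n = Propose i x \<Longrightarrow> n = i \<and> x = 0 \<and> i \<le> 2"
proof -
  assume h: "trc n = Propose i x"
  have lt: "n < 27" using h trc_lt by force
  show ?thesis using lt27[OF lt] h(1) by (elim disjE; simp add: trc_vals trc_Suc0)
qed

lemma recvS_set: "trc n = Recv i j (DistributeS X) \<Longrightarrow> j \<in> Pc \<Longrightarrow> sentS (lst Qsc trc j n) = Some X"
proof -
  assume h: "trc n = Recv i j (DistributeS X)" "j \<in> Pc"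
  have lt: "n < 27" using h trc_lt by force
  show ?thesis using lt27[OF lt] h(1) by (elim disjE; auto simp: trc_vals trc_Suc0 sS0 sS1 sS1' sS2)
qed

lemma recvT_set: "trc n = Recv i j (DistributeT X) \<Longrightarrow> j \<in> Pc \<Longrightarrow> sentT (lst Qsc trc j n) = Some X"
proof -
  assume h: "trc n = Recv i j (DistributeT X)" "j \<in> Pc"
  have lt: "n < 27" using h trc_lt by force
  show ?thesis using lt27[OF lt] h(1) by (elim disjE; auto simp: trc_vals trc_Suc0 sT0 sT1 sT1' sT2)
qed

lemma procs: "ev_procs (trc n) \<subseteq> Pc"
proof (cases "n < 27")
  case True
  then show ?thesis using lt27[of n] by (auto simp: trc_vals trc_Suc0 Pc_def)
next
  case False
  then show ?thesis by (simp add: trc_def)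
qed

lemma recvS_ex: "i \<in> Pc \<Longrightarrow> j \<in> Pc \<Longrightarrow> \<exists>m. trc m = Recv i j (DistributeS (SS j))"
  unfolding Pc_def SS_def using trc_vals trc_Suc0 by auto

lemma recvT_ex: "i \<in> Pc \<Longrightarrow> j \<in> Pc \<Longrightarrow> \<exists>m. trc m = Recv i j (DistributeT (SS j))"
  unfolding Pc_def SS_def using trc_vals trc_Suc0 by auto

lemma arb_ex: "i \<in> {0,1} \<Longrightarrow> j \<in> Pc \<Longrightarrow> \<exists>m. trc m = ArbDeliver i j 0"
  unfolding Pc_def using trc_vals trc_Suc0 by auto


lemma dc1: "downclose {{}} = {{}}" by (auto simp: downclose_def)
lemma dc0: "downclose {} = {}" by (auto simp: downclose_def)

lemma fp: "fail_prone Pc Fsc" by (simp add: fail_prone_def Fsc_def)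

lemma bq: "byz_quorum_system Pc Fsc Qsc"
  unfolding byz_quorum_system_def by (auto simp: Pc_def Fsc_def Qsc_def dc1 dc0)

lemma wise_iff: "wise Pc Fsc {} i \<longleftrightarrow> i \<in> {0,1}"
  by (auto simp: wise_def correct_def Pc_def Fsc_def dc1 dc0)

lemma mg: "max_guild Pc Fsc Qsc {} = {0,1}"
proof
  show "max_guild Pc Fsc Qsc {} \<subseteq> {0,1}"
    unfolding max_guild_def guild_def using wise_iff by blast
  have "guild Pc Fsc Qsc {} {0,1}"
    unfolding guild_def wise_iff by (auto simp: Qsc_def)
  then show "{0,1} \<subseteq> max_guild Pc Fsc Qsc {}"
    unfolding max_guild_def by blast
qed

lemma ex: "ng_execution Pc Fsc Qsc {} trc"
  unfolding ng_execution_def Let_def mg correct_def Diff_empty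
proof (intro conjI)
  show "{} \<subseteq> Pc" by simp
  show "\<forall>n. ev_procs (trc n) \<subseteq> Pc" using procs by blast
  show "\<forall>i\<in>Pc. \<exists>!n. \<exists>x. trc n = Propose i x"
  proof
    fix i assume "i \<in> Pc"
    then have "i = 0 \<or> i = 1 \<or> i = 2" by (simp add: Pc_def)
    then have "trc i = Propose i 0" using trc_vals by auto
    then show "\<exists>!n. \<exists>x. trc n = Propose i x" using prop_set by blast
  qed
  show "\<forall>n i j X. j \<in> Pc \<longrightarrow> trc n = Recv i j (DistributeS X) \<longrightarrow> sentS (lst Qsc trc j n) = Some X"
    using recvS_set by blast
  show "\<forall>n i j X. j \<in> Pc \<longrightarrow> trc n = Recv i j (DistributeT X) \<longrightarrow> sentT (lst Qsc trc j n) = Some X"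
    using recvT_set by blast
  show "\<forall>n i j X. i \<in> Pc \<longrightarrow> j \<in> Pc \<longrightarrow> sentS (lst Qsc trc j n) = Some X \<longrightarrow>
        (\<exists>m. trc m = Recv i j (DistributeS X))"
    using sentS_all recvS_ex by blast
  show "\<forall>n i j X. i \<in> Pc \<longrightarrow> j \<in> Pc \<longrightarrow> sentT (lst Qsc trc j n) = Some X \<longrightarrow>
        (\<exists>m. trc m = Recv i j (DistributeT X))"
    using sentT_all recvT_ex by blast
  show "\<forall>i\<in>Pc. \<forall>j n m x y. trc n = ArbDeliver i j x \<longrightarrow> trc m = ArbDeliver i j y \<longrightarrow> n = m"
  proof (intro ballI allI impI)
    fix i j n m x y assume "trc n = ArbDeliver i j x" "trc m = ArbDeliver i j y"
    from arb_set[OF this(1)] arb_set[OF this(2)] show "n = m" by auto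
  qed
  show "\<forall>i\<in>Pc. \<forall>j\<in>Pc. \<forall>n x. trc n = ArbDeliver i j x \<longrightarrow> (\<exists>m<n. trc m = Propose j x)"
  proof (intro ballI allI impI)
    fix i j n x assume "trc n = ArbDeliver i j x"
    from arb_set[OF this] have "x = 0" "j \<le> 2" "j < n" by auto
    moreover have "trc j = Propose j 0" using \<open>j \<le> 2\<close> trc_vals trc_Suc0
      by (cases j) (auto simp: le_Suc_eq numeral_eq_Suc)
    ultimately show "\<exists>m<n. trc m = Propose j x" by blast
  qed
  show "\<forall>j\<in>Pc. \<forall>i\<in>{0, 1}. \<forall>m x. trc m = Propose j x \<longrightarrow> (\<exists>n. trc n = ArbDeliver i j x)"
    using prop_set arb_ex by blast
  show "\<forall>i\<in>{0, 1}. \<forall>k\<in>{0, 1}. \<forall>j n n' x y. trc n = ArbDeliver i j x \<longrightarrow> trc n' = ArbDeliver k j y \<longrightarrow> x = y"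
  proof (intro ballI allI impI)
    fix i k j n n' x y assume "trc n = ArbDeliver i j x" "trc n' = ArbDeliver k j y"
    from arb_set[OF this(1)] arb_set[OF this(2)] show "x = y" by auto
  qed
  show "\<forall>i\<in>{0, 1}. \<forall>k\<in>{0, 1}. \<forall>j n x. trc n = ArbDeliver i j x \<longrightarrow> (\<exists>n' y. trc n' = ArbDeliver k j y)"
  proof (intro ballI allI impI)
    fix i k j n x :: nat assume k: "k \<in> {0,1}" and "trc n = ArbDeliver i j x"
    from arb_set[OF this(2)] have "j \<in> Pc" by (auto simp: Pc_def)
    then show "\<exists>n' y. trc n' = ArbDeliver k j y" using arb_ex[OF k] by blast
  qed
qed

lemma not_cc: "\<not> common_core Pc Fsc Qsc {} trc"
proof
  assume "common_core Pc Fsc Qsc {} trc"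
  then obtain i Q val where i: "i \<in> {0,1}" and Q: "Q \<in> Qsc i" and
    H: "\<forall>k\<in>{0,1}. \<forall>n U. agdel (lst Qsc trc k n) = Some U \<longrightarrow> {(j, val j) | j. j \<in> Q} \<subseteq> U"
    unfolding common_core_def mg by blast
  have u0: "{(j, val j) | j. j \<in> Q} \<subseteq> S0" using H a2 by blast
  have u1: "{(j, val j) | j. j \<in> Q} \<subseteq> S1" using H b2 by blast
  have "0 \<in> Q \<or> 1 \<in> Q" using i Q by (auto simp: Qsc_def)
  then show False using u0 u1 by (auto simp: S0_def S1_def)
qed

theorem lemma3p2:
  shows "\<not> (\<forall>(P :: nat set) Fs Qs Fa tr.
            finite P \<and> fail_prone P Fs \<and> byz_quorum_system P Fs Qs \<and>
            ng_execution P Fs Qs Fa tr \<and> max_guild P Fs Qs Fa \<noteq> {}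
            \<longrightarrow> common_core P Fs Qs Fa tr)"
proof
  assume "\<forall>(P :: nat set) Fs Qs Fa tr.
            finite P \<and> fail_prone P Fs \<and> byz_quorum_system P Fs Qs \<and>
            ng_execution P Fs Qs Fa tr \<and> max_guild P Fs Qs Fa \<noteq> {}
            \<longrightarrow> common_core P Fs Qs Fa tr"
  then have "common_core Pc Fsc Qsc {} trc"
    using fp bq ex mg by (auto simp: Pc_def)
  then show False using not_cc by blast
qed

end
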